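(* Let $X\times G\xrightarrow{\alpha}X$ be a Bourbaki-proper continuous right action of a locally compact Hausdorff group on a Hausdorff space, let $F\subseteq X$ be closed and let $H\trianglelefteq G$ be a closed normal subgroup, with quotient map $\pi\colon X\to X/H$. If $\alpha$ is $F$-proper, then $\pi(F)$ is closed in $X/H$ and the induced action of $G/H$ on $X/H$ is $\pi(F)$-proper.
   Context: For $A,B\subseteq X$ set $\langle A:B\rangle_\alpha:=\{g\in G: Bg\cap A\neq\emptyset\}$ and write $A\perp B$ if it is relatively compact in $G$. The action is Bourbaki-proper if for all $x,x'\in X$ there are neighborhoods $V_x\ni x$, $V_{x'}\ni x'$ with $V_{x'}\perp V_x$. For closed $F$, the action is $F$-proper if for every $x\in X$ there are neighborhoods $V_x\ni x$ and $V_F\supseteq F$ with $V_F\perp V_x$ (analogously for the induced action on $X/H$). *)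

theory Defs
  imports "HOL-Analysis.Analysis" "HOL-Algebra.Coset"
begin

definition topological_group :: "('g, 'b) monoid_scheme \<Rightarrow> 'g topology \<Rightarrow> bool" where
  "topological_group G T \<longleftrightarrow> group G \<and> topspace T = carrier G \<and>
     continuous_map (prod_topology T T) T (\<lambda>(g, h). g \<otimes>\<^bsub>G\<^esub> h) \<and>
     continuous_map T T (\<lambda>g. inv\<^bsub>G\<^esub> g)"

definition continuous_right_action ::
  "'x topology \<Rightarrow> ('g, 'b) monoid_scheme \<Rightarrow> 'g topology \<Rightarrow> ('x \<Rightarrow> 'g \<Rightarrow> 'x) \<Rightarrow> bool" where
  "continuous_right_action X G T \<alpha> \<longleftrightarrow>
     (\<forall>x\<in>topspace X. \<forall>g\<in>carrier G. \<alpha> x g \<in> topspace X) \<and>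
     (\<forall>x\<in>topspace X. \<alpha> x \<one>\<^bsub>G\<^esub> = x) \<and>
     (\<forall>x\<in>topspace X. \<forall>g\<in>carrier G. \<forall>h\<in>carrier G. \<alpha> (\<alpha> x g) h = \<alpha> x (g \<otimes>\<^bsub>G\<^esub> h)) \<and>
     continuous_map (prod_topology X T) X (\<lambda>(x, g). \<alpha> x g)"

definition quotient_top :: "'a topology \<Rightarrow> ('a \<Rightarrow> 'b) \<Rightarrow> 'b topology" where
  "quotient_top X f = topology (\<lambda>U. U \<subseteq> f ` topspace X \<and> openin X {x \<in> topspace X. f x \<in> U})"

definition nbhd_of :: "'a topology \<Rightarrow> 'a set \<Rightarrow> 'a set \<Rightarrow> bool" where
  "nbhd_of X A V \<longleftrightarrow> V \<subseteq> topspace X \<and> (\<exists>U. openin X U \<and> A \<subseteq> U \<and> U \<subseteq> V)"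

definition transporter :: "('g, 'b) monoid_scheme \<Rightarrow> ('x \<Rightarrow> 'g \<Rightarrow> 'x) \<Rightarrow> 'x set \<Rightarrow> 'x set \<Rightarrow> 'g set" where
  "transporter G \<alpha> A B = {g \<in> carrier G. (\<lambda>b. \<alpha> b g) ` B \<inter> A \<noteq> {}}"

definition relatively_compact :: "'g topology \<Rightarrow> 'g set \<Rightarrow> bool" where
  "relatively_compact T S \<longleftrightarrow> S \<subseteq> topspace T \<and> compactin T (T closure_of S)"

definition perp :: "('g, 'b) monoid_scheme \<Rightarrow> 'g topology \<Rightarrow> ('x \<Rightarrow> 'g \<Rightarrow> 'x) \<Rightarrow> 'x set \<Rightarrow> 'x set \<Rightarrow> bool" where
  "perp G T \<alpha> A B \<longleftrightarrow> relatively_compact T (transporter G \<alpha> A B)"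

definition Bourbaki_proper ::
  "'x topology \<Rightarrow> ('g, 'b) monoid_scheme \<Rightarrow> 'g topology \<Rightarrow> ('x \<Rightarrow> 'g \<Rightarrow> 'x) \<Rightarrow> bool" where
  "Bourbaki_proper X G T \<alpha> \<longleftrightarrow>
     (\<forall>x\<in>topspace X. \<forall>x'\<in>topspace X. \<exists>Vx Vx'.
        nbhd_of X {x} Vx \<and> nbhd_of X {x'} Vx' \<and> perp G T \<alpha> Vx' Vx)"

definition F_proper ::
  "'x topology \<Rightarrow> ('g, 'b) monoid_scheme \<Rightarrow> 'g topology \<Rightarrow> ('x \<Rightarrow> 'g \<Rightarrow> 'x) \<Rightarrow> 'x set \<Rightarrow> bool" where
  "F_proper X G T \<alpha> F \<longleftrightarrow>
     (\<forall>x\<in>topspace X. \<exists>Vx VF.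
        nbhd_of X {x} Vx \<and> nbhd_of X F VF \<and> perp G T \<alpha> VF Vx)"

definition orbit_map :: "('x \<Rightarrow> 'g \<Rightarrow> 'x) \<Rightarrow> 'g set \<Rightarrow> 'x \<Rightarrow> 'x set" where
  "orbit_map \<alpha> H x = (\<lambda>h. \<alpha> x h) ` H"

(* Induced action of G/H on X/H: (xH)(Hg) = {x h h' g} = xgH for H normal. *)
definition induced_action :: "('x \<Rightarrow> 'g \<Rightarrow> 'x) \<Rightarrow> 'x set \<Rightarrow> 'g set \<Rightarrow> 'x set" where
  "induced_action \<alpha> Q C = {\<alpha> x g | x g. x \<in> Q \<and> g \<in> C}"

end

theory Submission
  imports Defs
begin

lemma istop_quot: "istopology (\<lambda>U. U \<subseteq> f ` topspace X \<and> openin X {x \<in> topspace X. f x \<in> U})"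
proof -
  have i1: "openin X {x \<in> topspace X. f x \<in> S \<and> f x \<in> T}"
    if "openin X {x \<in> topspace X. f x \<in> S}" "openin X {x \<in> topspace X. f x \<in> T}" for S T
  proof -
    have eq: "{x \<in> topspace X. f x \<in> S \<and> f x \<in> T} = {x \<in> topspace X. f x \<in> S} \<inter> {x \<in> topspace X. f x \<in> T}"
      by blast
    show ?thesis unfolding eq by (rule openin_Int[OF that])
  qed
  have i2: "openin X {x \<in> topspace X. \<exists>U\<in>K. f x \<in> U}"
    if "\<forall>U\<in>K. openin X {x \<in> topspace X. f x \<in> U}" for K
  proof -
    have eq: "{x \<in> topspace X. \<exists>U\<in>K. f x \<in> U} = \<Union> ((\<lambda>U. {x \<in> topspace X. f x \<in> U}) ` K)"
      by blast
    show ?thesis unfolding eq by (rule openin_Union) (use that in blast)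
  qed
  show ?thesis unfolding istopology_def
    using i1 i2 by auto
qed

lemma openin_quotient_top:
  "openin (quotient_top X f) U \<longleftrightarrow> U \<subseteq> f ` topspace X \<and> openin X {x \<in> topspace X. f x \<in> U}"
  unfolding quotient_top_def by (simp only: topology_inverse'[OF istop_quot])

lemma topspace_quotient_top: "topspace (quotient_top X f) = f ` topspace X"
proof -
  have "{x \<in> topspace X. f x \<in> f ` topspace X} = topspace X" by auto
  then have "openin (quotient_top X f) (f ` topspace X)"
    by (simp add: openin_quotient_top)
  then have "f ` topspace X \<subseteq> topspace (quotient_top X f)" by (rule openin_subset)
  moreover have "topspace (quotient_top X f) \<subseteq> f ` topspace X"
    using openin_topspace[of "quotient_top X f"] unfolding openin_quotient_top by blast
  ultimately show ?thesis by blast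
qed

lemma continuous_map_quotient_top:
  assumes "\<And>x. x \<in> topspace X \<Longrightarrow> True"
  shows "continuous_map X (quotient_top X f) f"
  unfolding continuous_map_def
  by (auto simp: topspace_quotient_top openin_quotient_top)

lemma closedin_quotient_top:
  "closedin (quotient_top X f) C \<longleftrightarrow> C \<subseteq> f ` topspace X \<and> closedin X {x \<in> topspace X. f x \<in> C}"
proof -
  have e: "{x \<in> topspace X. f x \<in> f ` topspace X - C} = topspace X - {x \<in> topspace X. f x \<in> C}" by auto
  show ?thesis
    unfolding closedin_def topspace_quotient_top openin_quotient_top e
    by auto
qed

lemma closed_saturation:
  assumes cont: "continuous_map (prod_topology X T) X (\<lambda>(x, g). \<alpha> x g)"
    and A: "closedin X A" and K: "compactin T K"
  shows "closedin X {x \<in> topspace X. \<exists>k\<in>K. \<alpha> x k \<in> A}"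
proof -
  have KT: "K \<subseteq> topspace T" using K compactin_subset_topspace by blast
  have c2: "continuous_map (prod_topology X (subtopology T K)) X (\<lambda>(x, g). \<alpha> x g)"
    using continuous_map_from_subtopology[OF cont, of "topspace X \<times> K"]
    using subtopology_Times[of X T "topspace X" K] by simp
  have P: "closedin (prod_topology X (subtopology T K)) {p \<in> topspace (prod_topology X (subtopology T K)). (\<lambda>(x, g). \<alpha> x g) p \<in> A}"
    by (rule closedin_continuous_map_preimage[OF c2 A])
  have cm: "closed_map (prod_topology X (subtopology T K)) X fst"
    by (rule closed_map_fst[OF compact_space_subtopology[OF K]])
  have "closedin X (fst ` {p \<in> topspace (prod_topology X (subtopology T K)). (\<lambda>(x, g). \<alpha> x g) p \<in> A})"
    using cm P closed_map_def by blast
  moreover have "fst ` {p \<in> topspace (prod_topology X (subtopology T K)). (\<lambda>(x, g). \<alpha> x g) p \<in> A}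
     = {x \<in> topspace X. \<exists>k\<in>K. \<alpha> x k \<in> A}"
    using KT by (force simp: topspace_subtopology)
  ultimately show ?thesis by simp
qed


lemma orb_eq:
  assumes "group G" "subgroup H G" "continuous_right_action X G T \<alpha>"
    and x: "x \<in> topspace X" and y: "y \<in> topspace X"
  shows "orbit_map \<alpha> H x = orbit_map \<alpha> H y \<longleftrightarrow> (\<exists>h\<in>H. \<alpha> x h = y)"
proof -
  interpret G: group G by fact
  interpret S: subgroup H G by fact
  have a1: "\<And>x. x \<in> topspace X \<Longrightarrow> \<alpha> x \<one>\<^bsub>G\<^esub> = x"
   and a2: "\<And>x g h. x \<in> topspace X \<Longrightarrow> g \<in> carrier G \<Longrightarrow> h \<in> carrier G \<Longrightarrow> \<alpha> (\<alpha> x g) h = \<alpha> x (g \<otimes>\<^bsub>G\<^esub> h)"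
    using assms(3) unfolding continuous_right_action_def by auto
  show ?thesis
  proof
    assume "orbit_map \<alpha> H x = orbit_map \<alpha> H y"
    moreover have "y \<in> orbit_map \<alpha> H y" unfolding orbit_map_def
      using a1[OF y] S.one_closed by (metis image_eqI)
    ultimately have "y \<in> (\<lambda>k. \<alpha> x k) ` H" unfolding orbit_map_def by simp
    then show "\<exists>h\<in>H. \<alpha> x h = y" by auto
  next
    assume "\<exists>h\<in>H. \<alpha> x h = y"
    then obtain h where h: "h \<in> H" "\<alpha> x h = y" by blast
    have hc: "h \<in> carrier G" using h S.mem_carrier by blast
    show "orbit_map \<alpha> H x = orbit_map \<alpha> H y" unfolding orbit_map_def
    proof
      show "(\<lambda>k. \<alpha> x k) ` H \<subseteq> (\<lambda>k. \<alpha> y k) ` H"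
      proof
        fix z assume "z \<in> (\<lambda>k. \<alpha> x k) ` H"
        then obtain k where k: "k \<in> H" "z = \<alpha> x k" by blast
        have kc: "k \<in> carrier G" using k S.mem_carrier by blast
        have "\<alpha> y (inv\<^bsub>G\<^esub> h \<otimes>\<^bsub>G\<^esub> k) = \<alpha> x (h \<otimes>\<^bsub>G\<^esub> (inv\<^bsub>G\<^esub> h \<otimes>\<^bsub>G\<^esub> k))"
          using a2[OF x hc] h hc kc by simp
        also have "\<dots> = z" using hc kc k by (simp add: G.m_assoc[symmetric])
        finally show "z \<in> (\<lambda>k. \<alpha> y k) ` H"
          using k hc by (metis image_eqI S.m_closed S.m_inv_closed h(1))
      qed
    next
      show "(\<lambda>k. \<alpha> y k) ` H \<subseteq> (\<lambda>k. \<alpha> x k) ` H"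
      proof
        fix z assume "z \<in> (\<lambda>k. \<alpha> y k) ` H"
        then obtain k where k: "k \<in> H" "z = \<alpha> y k" by blast
        have kc: "k \<in> carrier G" using k S.mem_carrier by blast
        have "z = \<alpha> x (h \<otimes>\<^bsub>G\<^esub> k)" using a2[OF x hc kc] h k by simp
        then show "z \<in> (\<lambda>k. \<alpha> x k) ` H" using h k by blast
      qed
    qed
  qed
qed

lemma ind_eq:
  assumes "normal H G" "continuous_right_action X G T \<alpha>"
    and v: "v \<in> topspace X" and g: "g \<in> carrier G"
  shows "induced_action \<alpha> (orbit_map \<alpha> H v) (H #>\<^bsub>G\<^esub> g) = orbit_map \<alpha> H (\<alpha> v g)"
proof -
  interpret N: normal H G by fact
  have a2: "\<And>x g h. x \<in> topspace X \<Longrightarrow> g \<in> carrier G \<Longrightarrow> h \<in> carrier G \<Longrightarrow> \<alpha> (\<alpha> x g) h = \<alpha> x (g \<otimes>\<^bsub>G\<^esub> h)"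
    using assms(2) unfolding continuous_right_action_def by auto
  have ce: "H #>\<^bsub>G\<^esub> g = g <#\<^bsub>G\<^esub> H" using N.coset_eq g by blast
  show ?thesis
  proof
    show "induced_action \<alpha> (orbit_map \<alpha> H v) (H #>\<^bsub>G\<^esub> g) \<subseteq> orbit_map \<alpha> H (\<alpha> v g)"
    proof
      fix z assume "z \<in> induced_action \<alpha> (orbit_map \<alpha> H v) (H #>\<^bsub>G\<^esub> g)"
      then obtain h h' where hh: "h \<in> H" "h' \<in> H" "z = \<alpha> (\<alpha> v h) (h' \<otimes>\<^bsub>G\<^esub> g)"
        unfolding induced_action_def orbit_map_def r_coset_def by blast
      have hc: "h \<in> carrier G" "h' \<in> carrier G" using hh N.mem_carrier by auto
      have "z = \<alpha> v (h \<otimes>\<^bsub>G\<^esub> (h' \<otimes>\<^bsub>G\<^esub> g))"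
        using hh(3) a2[OF v hc(1) N.m_closed[OF hc(2) g]] by simp
      also have "\<dots> = \<alpha> v ((h \<otimes>\<^bsub>G\<^esub> h') \<otimes>\<^bsub>G\<^esub> g)"
        using hc g by (simp add: N.m_assoc)
      finally have "z = \<alpha> v ((h \<otimes>\<^bsub>G\<^esub> h') \<otimes>\<^bsub>G\<^esub> g)" .
      moreover have "(h \<otimes>\<^bsub>G\<^esub> h') \<otimes>\<^bsub>G\<^esub> g \<in> H #>\<^bsub>G\<^esub> g"
        using N.rcosI[OF subgroup.m_closed[OF N.subgroup_axioms hh(1,2)] N.subset g] .
      then have "(h \<otimes>\<^bsub>G\<^esub> h') \<otimes>\<^bsub>G\<^esub> g \<in> g <#\<^bsub>G\<^esub> H" using ce by simp
      then obtain k where k: "k \<in> H" "(h \<otimes>\<^bsub>G\<^esub> h') \<otimes>\<^bsub>G\<^esub> g = g \<otimes>\<^bsub>G\<^esub> k"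
        unfolding l_coset_def by blast
      ultimately have "z = \<alpha> (\<alpha> v g) k" using a2[OF v g] k N.mem_carrier by simp
      then show "z \<in> orbit_map \<alpha> H (\<alpha> v g)" unfolding orbit_map_def using k by blast
    qed
  next
    show "orbit_map \<alpha> H (\<alpha> v g) \<subseteq> induced_action \<alpha> (orbit_map \<alpha> H v) (H #>\<^bsub>G\<^esub> g)"
    proof
      fix z assume "z \<in> orbit_map \<alpha> H (\<alpha> v g)"
      then obtain k where k: "k \<in> H" "z = \<alpha> (\<alpha> v g) k" unfolding orbit_map_def by blast
      have "g \<otimes>\<^bsub>G\<^esub> k \<in> H #>\<^bsub>G\<^esub> g" using ce k unfolding l_coset_def by blast
      then obtain h' where h': "h' \<in> H" "g \<otimes>\<^bsub>G\<^esub> k = h' \<otimes>\<^bsub>G\<^esub> g" unfolding r_coset_def by blast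
      have a1: "\<alpha> v \<one>\<^bsub>G\<^esub> = v" using assms(2) v unfolding continuous_right_action_def by blast
      have kc: "k \<in> carrier G" using k(1) N.subset by blast
      have "z = \<alpha> v (g \<otimes>\<^bsub>G\<^esub> k)" using k(2) a2[OF v g kc] by simp
      then have "z = \<alpha> (\<alpha> v \<one>\<^bsub>G\<^esub>) (h' \<otimes>\<^bsub>G\<^esub> g)" using h'(2) a1 by simp
      moreover have "\<alpha> v \<one>\<^bsub>G\<^esub> \<in> orbit_map \<alpha> H v" unfolding orbit_map_def
        using subgroup.one_closed[OF N.subgroup_axioms] by blast
      moreover have "h' \<otimes>\<^bsub>G\<^esub> g \<in> H #>\<^bsub>G\<^esub> g" using h' unfolding r_coset_def by blast
      ultimately show "z \<in> induced_action \<alpha> (orbit_map \<alpha> H v) (H #>\<^bsub>G\<^esub> g)"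
        unfolding induced_action_def by blast
    qed
  qed
qed


lemma orbit_open:
  assumes "group G" "subgroup H G" "continuous_right_action X G T \<alpha>" "topspace T = carrier G"
    and U: "openin X U"
  shows "openin (quotient_top X (orbit_map \<alpha> H)) (orbit_map \<alpha> H ` U)"
proof -
  have UX: "U \<subseteq> topspace X" using U openin_subset by blast
  have cont: "continuous_map (prod_topology X T) X (\<lambda>(x, g). \<alpha> x g)"
    using assms(3) unfolding continuous_right_action_def by blast
  have HT: "H \<subseteq> topspace T" using assms(2,4) subgroup.subset by blast
  have ch: "continuous_map X X (\<lambda>x. \<alpha> x h)" if "h \<in> H" for h
  proof -
    have "continuous_map X (prod_topology X T) (\<lambda>x. (x, h))"
      using HT that by (intro continuous_map_pairedI) auto
    from continuous_map_compose[OF this cont] show ?thesis by (simp add: o_def)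
  qed
  have eq: "{x \<in> topspace X. orbit_map \<alpha> H x \<in> orbit_map \<alpha> H ` U}
      = (\<Union>h\<in>H. {x \<in> topspace X. \<alpha> x h \<in> U})" (is "?lhs = ?rhs")
  proof -
    have "orbit_map \<alpha> H x \<in> orbit_map \<alpha> H ` U \<longleftrightarrow> (\<exists>h\<in>H. \<alpha> x h \<in> U)" if x: "x \<in> topspace X" for x
    proof
      assume "orbit_map \<alpha> H x \<in> orbit_map \<alpha> H ` U"
      then obtain u where "u \<in> U" "orbit_map \<alpha> H x = orbit_map \<alpha> H u" by blast
      then show "\<exists>h\<in>H. \<alpha> x h \<in> U" using orb_eq[OF assms(1,2,3) x, of u] UX by auto
    next
      assume "\<exists>h\<in>H. \<alpha> x h \<in> U"
      then obtain h where "h \<in> H" "\<alpha> x h \<in> U" by blast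
      then show "orbit_map \<alpha> H x \<in> orbit_map \<alpha> H ` U"
        using orb_eq[OF assms(1,2,3) x, of "\<alpha> x h"] UX by blast
    qed
    note iff = this
    show ?thesis
    proof (rule Set.set_eqI)
      fix y
      show "y \<in> ?lhs \<longleftrightarrow> y \<in> ?rhs"
      proof (cases "y \<in> topspace X")
        case True then show ?thesis using iff[OF True] by simp
      next
        case False then show ?thesis by simp
      qed
    qed
  qed
  show ?thesis unfolding openin_quotient_top eq
    using UX openin_continuous_map_preimage[OF ch U]
    by (auto intro!: openin_Union)
qed

theorem lemma2p10:
  fixes G :: "('g, 'b) monoid_scheme" and T :: "'g topology"
    and X :: "'x topology" and \<alpha> :: "'x \<Rightarrow> 'g \<Rightarrow> 'x"
    and F :: "'x set" and H :: "'g set"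
  assumes "topological_group G T"
    and "locally_compact_space T" and "Hausdorff_space T"
    and "Hausdorff_space X"
    and "continuous_right_action X G T \<alpha>"
    and "Bourbaki_proper X G T \<alpha>"
    and "closedin X F"
    and "normal H G" and "closedin T H"
    and "F_proper X G T \<alpha> F"
  shows "closedin (quotient_top X (orbit_map \<alpha> H)) (orbit_map \<alpha> H ` F)
    \<and> F_proper (quotient_top X (orbit_map \<alpha> H)) (G Mod H)
        (quotient_top T (\<lambda>g. H #>\<^bsub>G\<^esub> g)) (induced_action \<alpha>) (orbit_map \<alpha> H ` F)"
proof -
  let ?\<pi> = "orbit_map \<alpha> H"
  let ?Q = "quotient_top X ?\<pi>"
  let ?q = "\<lambda>g. H #>\<^bsub>G\<^esub> g"
  let ?T' = "quotient_top T ?q"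
  have grp: "group G" and TG: "topspace T = carrier G"
    and mcont: "continuous_map (prod_topology T T) T (\<lambda>(g, h). g \<otimes>\<^bsub>G\<^esub> h)"
    and icont: "continuous_map T T (\<lambda>g. inv\<^bsub>G\<^esub> g)"
    using assms(1) unfolding topological_group_def by auto
  interpret G: group G by fact
  interpret N: normal H G by fact
  have sg: "subgroup H G" by (rule N.subgroup_axioms)
  have act: "continuous_right_action X G T \<alpha>" by fact
  have a0: "\<And>x g. x \<in> topspace X \<Longrightarrow> g \<in> carrier G \<Longrightarrow> \<alpha> x g \<in> topspace X"
   and a2: "\<And>x g h. x \<in> topspace X \<Longrightarrow> g \<in> carrier G \<Longrightarrow> h \<in> carrier G \<Longrightarrow> \<alpha> (\<alpha> x g) h = \<alpha> x (g \<otimes>\<^bsub>G\<^esub> h)"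
   and cont: "continuous_map (prod_topology X T) X (\<lambda>(x, g). \<alpha> x g)"
    using act unfolding continuous_right_action_def by auto
  have FX: "F \<subseteq> topspace X" using assms(7) closedin_subset by blast
  have HG: "H \<subseteq> carrier G" using N.subset .
  have loc: "\<exists>Vx VF Ux UF. Vx \<subseteq> topspace X \<and> VF \<subseteq> topspace X \<and> openin X Ux \<and> x \<in> Ux \<and> Ux \<subseteq> Vx
      \<and> openin X UF \<and> F \<subseteq> UF \<and> UF \<subseteq> VF \<and> transporter G \<alpha> VF Vx \<subseteq> topspace T
      \<and> compactin T (T closure_of (transporter G \<alpha> VF Vx))" if "x \<in> topspace X" for x
    using assms(10) that unfolding F_proper_def nbhd_of_def perp_def relatively_compact_def
    by (metis insert_subset)
  let ?M = "{x \<in> topspace X. \<exists>h\<in>H. \<alpha> x h \<in> F}"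
  have Mclosed: "closedin X ?M"
    unfolding closedin_def
  proof (intro conjI)
    show "?M \<subseteq> topspace X" by (rule Collect_subset)
    show "openin X (topspace X - ?M)"
    proof (subst openin_subopen, intro ballI)
      fix x assume x: "x \<in> topspace X - ?M"
      have xX: "x \<in> topspace X" using x by (rule DiffD1)
      from loc[OF xX] obtain Vx VF Ux UF where V: "Vx \<subseteq> topspace X" "VF \<subseteq> topspace X" "openin X Ux" "x \<in> Ux" "Ux \<subseteq> Vx"
        "openin X UF" "F \<subseteq> UF" "UF \<subseteq> VF" "transporter G \<alpha> VF Vx \<subseteq> topspace T"
        "compactin T (T closure_of (transporter G \<alpha> VF Vx))"
        by (elim exE conjE) (rule that, assumption+)
      let ?S = "transporter G \<alpha> VF Vx"
      let ?K = "T closure_of ?S \<inter> H"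
      have Kc: "compactin T ?K"
        by (rule closed_compactin[OF V(10)]) (auto intro: closedin_Int assms(9))
      let ?B = "{z \<in> topspace X. \<exists>k\<in>?K. \<alpha> z k \<in> F}"
      have Bc: "closedin X ?B" by (rule closed_saturation[OF cont assms(7) Kc])
      show "\<exists>W. openin X W \<and> x \<in> W \<and> W \<subseteq> topspace X - ?M"
      proof (intro exI conjI)
        show "openin X (Ux - ?B)" using V(3) Bc by (rule openin_diff)
        show "x \<in> Ux - ?B" using x V(4) by auto
        show "Ux - ?B \<subseteq> topspace X - ?M"
        proof
          fix z assume z: "z \<in> Ux - ?B"
          have zX: "z \<in> topspace X" using z V(3) openin_subset by blast
          show "z \<in> topspace X - ?M"
          proof (rule ccontr)
            assume "z \<notin> topspace X - ?M"
            then obtain h where h: "h \<in> H" "\<alpha> z h \<in> F" using zX by blast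
            have "h \<in> ?S" unfolding transporter_def
              using h HG z V(5,7,8) by blast
            then have "h \<in> T closure_of ?S" using closure_of_subset[OF V(9)] by blast
            then have "z \<in> ?B" using h zX by blast
            then show False using z by blast
          qed
        qed
      qed
    qed
  qed
  have preF: "{x \<in> topspace X. ?\<pi> x \<in> ?\<pi> ` F} = ?M" (is "?lhs = ?rhs")
  proof -
    have "?\<pi> x \<in> ?\<pi> ` F \<longleftrightarrow> (\<exists>h\<in>H. \<alpha> x h \<in> F)" if x: "x \<in> topspace X" for x
    proof
      assume "?\<pi> x \<in> ?\<pi> ` F"
      then obtain u where "u \<in> F" "?\<pi> x = ?\<pi> u" by blast
      then show "\<exists>h\<in>H. \<alpha> x h \<in> F" using orb_eq[OF grp sg act x, of u] FX by auto
    next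
      assume "\<exists>h\<in>H. \<alpha> x h \<in> F"
      then obtain h where "h \<in> H" "\<alpha> x h \<in> F" by blast
      then show "?\<pi> x \<in> ?\<pi> ` F"
        using orb_eq[OF grp sg act x, of "\<alpha> x h"] FX by blast
    qed
    note iff = this
    show ?thesis
    proof (rule Set.set_eqI)
      fix y
      show "y \<in> ?lhs \<longleftrightarrow> y \<in> ?rhs"
      proof (cases "y \<in> topspace X")
        case True then show ?thesis using iff[OF True] by simp
      next
        case False then show ?thesis by simp
      qed
    qed
  qed
  have part1: "closedin ?Q (?\<pi> ` F)"
    unfolding closedin_quotient_top preF using FX Mclosed by blast
  have part2: "F_proper ?Q (G Mod H) ?T' (induced_action \<alpha>) (?\<pi> ` F)"
    unfolding F_proper_def
  proof
    fix p assume "p \<in> topspace ?Q"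
    then obtain x where x: "x \<in> topspace X" "p = ?\<pi> x" unfolding topspace_quotient_top by blast
    from loc[OF x(1)] obtain Vx VF Ux UF where V: "Vx \<subseteq> topspace X" "VF \<subseteq> topspace X" "openin X Ux" "x \<in> Ux" "Ux \<subseteq> Vx"
        "openin X UF" "F \<subseteq> UF" "UF \<subseteq> VF" "transporter G \<alpha> VF Vx \<subseteq> topspace T"
        "compactin T (T closure_of (transporter G \<alpha> VF Vx))"
      by (elim exE conjE) (rule that, assumption+)
    let ?S = "transporter G \<alpha> VF Vx"
    let ?C = "T closure_of ?S"
    let ?S' = "transporter (G Mod H) (induced_action \<alpha>) (?\<pi> ` VF) (?\<pi> ` Vx)"
    have n1: "nbhd_of ?Q {p} (?\<pi> ` Vx)" unfolding nbhd_of_def topspace_quotient_top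
    proof (intro conjI exI)
      show "?\<pi> ` Vx \<subseteq> ?\<pi> ` topspace X" using V(1) by (rule image_mono)
      show "openin ?Q (?\<pi> ` Ux)" by (rule orbit_open[OF grp sg act TG V(3)])
      show "{p} \<subseteq> ?\<pi> ` Ux" using x(2) V(4) by simp
      show "?\<pi> ` Ux \<subseteq> ?\<pi> ` Vx" using V(5) by (rule image_mono)
    qed
    have n2: "nbhd_of ?Q (?\<pi> ` F) (?\<pi> ` VF)" unfolding nbhd_of_def topspace_quotient_top
    proof (intro conjI exI)
      show "?\<pi> ` VF \<subseteq> ?\<pi> ` topspace X" using V(2) by (rule image_mono)
      show "openin ?Q (?\<pi> ` UF)" by (rule orbit_open[OF grp sg act TG V(6)])
      show "?\<pi> ` F \<subseteq> ?\<pi> ` UF" using V(7) by (rule image_mono)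
      show "?\<pi> ` UF \<subseteq> ?\<pi> ` VF" using V(8) by (rule image_mono)
    qed
    have qcont: "continuous_map T ?T' ?q" by (rule continuous_map_quotient_top) simp
    have tsT': "topspace ?T' = carrier (G Mod H)"
      unfolding topspace_quotient_top carrier_FactGroup TG by (rule refl)
    have CT: "?C \<subseteq> carrier G" unfolding TG[symmetric] by (rule closure_of_subset_topspace)
    have Dcomp: "compactin ?T' (?q ` ?C)" by (rule image_compactin[OF V(10) qcont])
    have invC: "compactin T ((\<lambda>g. inv\<^bsub>G\<^esub> g) ` ?C)" by (rule image_compactin[OF V(10) icont])
    have pre: "{g \<in> topspace T. ?q g \<in> ?q ` ?C} = {g \<in> topspace T. \<exists>k\<in>(\<lambda>g. inv\<^bsub>G\<^esub> g) ` ?C. g \<otimes>\<^bsub>G\<^esub> k \<in> H}" (is "?lhs = ?rhs")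
    proof -
      have "?q g \<in> ?q ` ?C \<longleftrightarrow> (\<exists>k\<in>(\<lambda>g. inv\<^bsub>G\<^esub> g) ` ?C. g \<otimes>\<^bsub>G\<^esub> k \<in> H)" if g: "g \<in> carrier G" for g
      proof
        assume "?q g \<in> ?q ` ?C"
        then obtain c where c: "c \<in> ?C" "H #>\<^bsub>G\<^esub> g = H #>\<^bsub>G\<^esub> c" by blast
        have "g \<in> H #>\<^bsub>G\<^esub> c" using c G.rcos_self[OF g sg] by simp
        then have "g \<otimes>\<^bsub>G\<^esub> inv\<^bsub>G\<^esub> c \<in> H" using N.rcos_module_imp[OF grp] c CT by blast
        then show "\<exists>k\<in>(\<lambda>g. inv\<^bsub>G\<^esub> g) ` ?C. g \<otimes>\<^bsub>G\<^esub> k \<in> H" using c by blast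
      next
        assume "\<exists>k\<in>(\<lambda>g. inv\<^bsub>G\<^esub> g) ` ?C. g \<otimes>\<^bsub>G\<^esub> k \<in> H"
        then obtain c where c: "c \<in> ?C" "g \<otimes>\<^bsub>G\<^esub> inv\<^bsub>G\<^esub> c \<in> H" by blast
        have "g \<in> H #>\<^bsub>G\<^esub> c" using N.rcos_module_rev[OF grp _ g c(2)] c CT by blast
        then have "H #>\<^bsub>G\<^esub> c = H #>\<^bsub>G\<^esub> g" using G.repr_independence[OF _ _ sg] c CT by blast
        then have "H #>\<^bsub>G\<^esub> g = ?q c" by simp
        then show "?q g \<in> ?q ` ?C" using c(1) by (rule image_eqI)
      qed
      note iff = this
      show ?thesis
      proof (rule Set.set_eqI)
        fix y
        show "y \<in> ?lhs \<longleftrightarrow> y \<in> ?rhs"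
        proof (cases "y \<in> carrier G")
          case True then show ?thesis using iff[OF True] TG by simp
        next
          case False then show ?thesis using TG by simp
        qed
      qed
    qed
    have Dclosed: "closedin ?T' (?q ` ?C)"
      unfolding closedin_quotient_top pre
      using closed_saturation[OF mcont assms(9) invC] CT TG by auto
    have sub: "?S' \<subseteq> ?q ` ?S"
    proof
      fix C' assume C': "C' \<in> ?S'"
      then obtain g where g: "g \<in> carrier G" "C' = H #>\<^bsub>G\<^esub> g"
        unfolding transporter_def carrier_FactGroup by blast
      from C' obtain b where b: "b \<in> ?\<pi> ` Vx" "induced_action \<alpha> b C' \<in> ?\<pi> ` VF"
        unfolding transporter_def by blast
      then obtain v w where vw: "v \<in> Vx" "b = ?\<pi> v" "w \<in> VF" "induced_action \<alpha> b C' = ?\<pi> w" by blast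
      have vX: "v \<in> topspace X" and wX: "w \<in> topspace X" using vw V(1,2) by auto
      have "?\<pi> (\<alpha> v g) = ?\<pi> w" using vw g ind_eq[OF assms(8) act vX g(1)] by simp
      then obtain h where h: "h \<in> H" "\<alpha> (\<alpha> v g) h = w"
        using orb_eq[OF grp sg act a0[OF vX g(1)] wX] by blast
      have hc: "h \<in> carrier G" using h HG by blast
      have gh: "g \<otimes>\<^bsub>G\<^esub> h \<in> carrier G" using g hc by simp
      have "\<alpha> v (g \<otimes>\<^bsub>G\<^esub> h) = w" using h a2[OF vX g(1) hc] by simp
      then have inS: "g \<otimes>\<^bsub>G\<^esub> h \<in> ?S" unfolding transporter_def using gh vw by blast
      have "g \<otimes>\<^bsub>G\<^esub> h \<in> g <#\<^bsub>G\<^esub> H" using h unfolding l_coset_def by blast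
      then have "g \<otimes>\<^bsub>G\<^esub> h \<in> H #>\<^bsub>G\<^esub> g" using N.coset_eq g by blast
      then have "H #>\<^bsub>G\<^esub> g = H #>\<^bsub>G\<^esub> (g \<otimes>\<^bsub>G\<^esub> h)" using G.repr_independence[OF _ g(1) sg] by blast
      then show "C' \<in> ?q ` ?S" using g inS by blast
    qed
    have S'sub: "?S' \<subseteq> topspace ?T'" unfolding tsT' transporter_def by blast
    have "?S' \<subseteq> ?q ` ?C" using sub closure_of_subset[OF V(9)] by blast
    then have "?T' closure_of ?S' \<subseteq> ?q ` ?C" using closure_of_minimal Dclosed by blast
    then have "compactin ?T' (?T' closure_of ?S')"
      using closed_compactin[OF Dcomp] closedin_closure_of by blast
    then have "perp (G Mod H) ?T' (induced_action \<alpha>) (?\<pi> ` VF) (?\<pi> ` Vx)"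
      unfolding perp_def relatively_compact_def using S'sub by blast
    then show "\<exists>Vx VF. nbhd_of ?Q {p} Vx \<and> nbhd_of ?Q (?\<pi> ` F) VF
        \<and> perp (G Mod H) ?T' (induced_action \<alpha>) VF Vx"
      using n1 n2 by blast
  qed
  show ?thesis using part1 part2 by blast
qed

end
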